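(* There is an absolute constant $c>0$ such that for all real $\mu,\mu^*>0$ with $\mu\in[c,\tfrac43\mu^*]$, the function $$G(\mu,\mu^* )=\mathbb E_{x\sim\mathcal N(\mu^*,1)}\Big[-\tfrac12\tanh''(\mu x)\mu^2x+\tanh'(\mu x)\mu x^2-\tanh'(\mu x)\mu\Big]$$ satisfies $G(\mu,\mu^* )\le0.01\,|\mu-\mu^*|$. *)

theory Defs
  imports "HOL-Probability.Probability"
begin

definition G_integrand :: "real \<Rightarrow> real \<Rightarrow> real" where
  "G_integrand \<mu> x =
     - (1/2) * (deriv (deriv tanh)) (\<mu> * x) * \<mu>^2 * x
     + (deriv tanh) (\<mu> * x) * \<mu> * x^2
     - (deriv tanh) (\<mu> * x) * \<mu>"

definition G :: "real \<Rightarrow> real \<Rightarrow> real" where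
  "G \<mu> \<mu>s = (\<integral>x. G_integrand \<mu> x \<partial>(density lborel (normal_density \<mu>s 1)))"

end

theory Submission imports Defs begin

lemma deriv_tanh: "deriv tanh = (\<lambda>x::real. 1 - tanh x ^ 2)"
proof
  fix x :: real show "deriv tanh x = 1 - tanh x ^ 2"
    by (rule DERIV_imp_deriv) (auto intro!: derivative_eq_intros)
qed

lemma deriv2_tanh: "deriv (deriv tanh) = (\<lambda>x::real. -2 * tanh x * (1 - tanh x ^ 2))"
proof
  fix x :: real show "deriv (deriv tanh) x = -2 * tanh x * (1 - tanh x ^ 2)"
    unfolding deriv_tanh
    by (rule DERIV_imp_deriv) (auto intro!: derivative_eq_intros simp: power2_eq_square algebra_simps)
qed

lemma one_minus_tanh2: "1 - tanh (y::real) ^ 2 = 1 / cosh y ^ 2"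
proof -
  have "cosh y \<noteq> 0" by (metis cosh_real_pos less_irrefl)
  then have "1 - tanh y^2 = (cosh y^2 - sinh y^2)/cosh y^2" by (simp add: tanh_def power_divide field_simps)
  then show ?thesis by (simp add: cosh_square_eq)
qed

lemma G_integrand_eq: "G_integrand \<mu> x = \<mu> * (\<mu> * x * tanh (\<mu> * x) + x^2 - 1) / cosh (\<mu> * x) ^ 2"
  unfolding G_integrand_def deriv2_tanh unfolding deriv_tanh one_minus_tanh2
  by (simp add: field_simps power2_eq_square)

definition nd :: "real \<Rightarrow> real \<Rightarrow> real" where "nd b x = exp (-((x-b)^2)/2) / sqrt (2*pi)"

lemma normal_nd: "normal_density b 1 = nd b"
  by (auto simp: normal_density_def nd_def fun_eq_iff)

lemma nd_pos: "nd b x > 0" by (simp add: nd_def)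

lemma nd_shift: "nd b x = exp (- (b^2) / 2) * exp (b*x) * nd 0 x"
proof -
  have eq: "-((x-b)^2)/2 = - (b^2)/2 + b*x + -((x-0)^2)/2" by (simp add: power2_eq_square field_simps)
  have "exp (-((x-b)^2)/2) = exp (- (b^2)/2 + b*x + -((x-0)^2)/2)" by (rule arg_cong[where f=exp]) (rule eq)
  also have "\<dots> = exp (- (b^2)/2) * exp (b*x) * exp (-((x-0)^2)/2)" by (simp only: exp_add)
  finally show ?thesis unfolding nd_def by simp
qed

lemma nd_exp: "nd 0 x * exp (m*x) = exp ((m^2)/2) * nd m x"
proof -
  have "-((x-0)^2)/2 + m*x = (m^2)/2 + -((x-m)^2)/2" by (simp add: power2_eq_square field_simps)
  then have "exp (-((x-0)^2)/2) * exp (m*x) = exp ((m^2)/2) * exp (-((x-m)^2)/2)" by (simp add: exp_add[symmetric])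
  then show ?thesis unfolding nd_def by simp
qed

lemma integrable_nd: "integrable lborel (nd b)"
  using integrable_normal_density[of 1 b] unfolding normal_nd by simp

lemma integral_nd: "integral\<^sup>L lborel (nd b) = 1"
  using integral_normal_density[of 1 b] unfolding normal_nd by simp

lemma int_bound:
  fixes f :: "real \<Rightarrow> real"
  assumes c: "\<And>x. isCont f x" and C: "C \<ge> 0" and b: "\<And>x. \<bar>f x\<bar> \<le> C * exp (K*\<bar>x\<bar>) * nd 0 x"
  shows "integrable lborel f"
proof (rule Bochner_Integration.integrable_bound)
  show "integrable lborel (\<lambda>x. C * exp (K^2/2) * (nd K x + nd (-K) x))"
    by (intro integrable_mult_right Bochner_Integration.integrable_add integrable_nd)
  show "f \<in> borel_measurable lborel"
    using c by (auto intro!: borel_measurable_continuous_onI continuous_at_imp_continuous_on)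
  show "AE x in lborel. norm (f x) \<le> norm (C * exp (K^2/2) * (nd K x + nd (-K) x))"
  proof (intro AE_I2)
    fix x
    have "exp (K*\<bar>x\<bar>) \<le> exp (K*x) + exp (-K*x)"
      by (cases "x \<ge> 0") auto
    hence "C * exp (K*\<bar>x\<bar>) * nd 0 x \<le> C * (exp (K*x) + exp (-K*x)) * nd 0 x"
      using C nd_pos[of 0 x] by (intro mult_right_mono mult_left_mono) auto
    also have "\<dots> = C * exp (K^2/2) * (nd K x + nd (-K) x)"
      using nd_exp[of x K] nd_exp[of x "-K"] by (simp add: algebra_simps)
    finally show "norm (f x) \<le> norm (C * exp (K^2/2) * (nd K x + nd (-K) x))"
      using b[of x] C nd_pos[of K x] nd_pos[of "-K" x] by simp
  qed
qed


lemma FTC_R: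
  fixes f F :: "real \<Rightarrow> real"
  assumes F: "\<And>x. (F has_real_derivative f x) (at x)"
    and c: "\<And>x. isCont f x" and i: "integrable lborel f"
    and t: "(F \<longlongrightarrow> 0) at_top" "(F \<longlongrightarrow> 0) at_bot"
  shows "integral\<^sup>L lborel f = 0"
proof -
  have U: "einterval (-\<infinity>) \<infinity> = (UNIV :: real set)"
    by (auto simp: einterval_iff)
  have "(LBINT x=-\<infinity>..\<infinity>. f x) = 0 - 0"
    apply (rule interval_integral_FTC_integrable)
    using F c i t by (auto simp: has_real_derivative_iff_has_vector_derivative[symmetric] 
       U set_integrable_def ereal_tendsto_simps1)
  then show ?thesis
    by (simp add: interval_lebesgue_integral_def U set_lebesgue_integral_def)
qed

lemma cosh_ne0[simp]: "cosh (y::real) \<noteq> 0"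
  by (metis cosh_real_pos less_irrefl)

lemma cosh_ge1: "cosh (y::real) \<ge> 1"
  by (simp add: cosh_real_ge_1) 

lemma cosh_le_exp: "cosh (y::real) \<le> exp \<bar>y\<bar>"
  by (cases "y \<ge> 0") (auto simp: cosh_def)

lemma cosh_ge_exp: "exp \<bar>y\<bar> / 2 \<le> cosh (y::real)"
  by (cases "y \<ge> 0") (auto simp: cosh_def)

lemma abs_sinh_le: "\<bar>sinh (y::real)\<bar> \<le> cosh y"
  by (cases "y \<ge> 0") (auto simp: cosh_def sinh_def)

lemma x1_le: "\<bar>x::real\<bar> \<le> exp \<bar>x\<bar>"
  using exp_ge_add_one_self[of "\<bar>x\<bar>"] by linarith

lemma x2_le: "(x::real)^2 \<le> 4 * exp \<bar>x\<bar>"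
proof -
  have h0: "0 \<le> \<bar>x\<bar>/2" by simp
  have "1 + \<bar>x\<bar>/2 \<le> exp (\<bar>x\<bar>/2)" by (rule exp_ge_add_one_self)
  hence h1: "\<bar>x\<bar>/2 \<le> exp (\<bar>x\<bar>/2)" by linarith
  have "(\<bar>x\<bar>/2)^2 \<le> exp (\<bar>x\<bar>/2) ^ 2" by (rule power_mono[OF h1 h0])
  also have "exp (\<bar>x\<bar>/2) ^ 2 = exp \<bar>x\<bar>" by (simp flip: exp_of_nat_mult)
  finally have "(\<bar>x\<bar>/2)^2 \<le> exp \<bar>x\<bar>" .
  moreover have "(\<bar>x\<bar>/2)^2 = x^2/4" by (simp add: power_divide)
  ultimately show ?thesis by simp
qed

lemma x3_le: "\<bar>x::real\<bar>^3 \<le> 27 * exp \<bar>x\<bar>"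
proof -
  have h0: "0 \<le> \<bar>x\<bar>/3" by simp
  have "1 + \<bar>x\<bar>/3 \<le> exp (\<bar>x\<bar>/3)" by (rule exp_ge_add_one_self)
  hence h1: "\<bar>x\<bar>/3 \<le> exp (\<bar>x\<bar>/3)" by linarith
  have "(\<bar>x\<bar>/3)^3 \<le> exp (\<bar>x\<bar>/3) ^ 3" by (rule power_mono[OF h1 h0])
  also have "exp (\<bar>x\<bar>/3) ^ 3 = exp \<bar>x\<bar>" by (simp flip: exp_of_nat_mult)
  finally have "(\<bar>x\<bar>/3)^3 \<le> exp \<bar>x\<bar>" .
  moreover have "(\<bar>x\<bar>/3)^3 = \<bar>x\<bar>^3/27" by (simp add: power_divide)
  ultimately show ?thesis by simp
qed

lemma tri3: "\<bar>a + c - 1\<bar> \<le> \<bar>a\<bar> + \<bar>c\<bar> + (1::real)"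
proof -
  have "\<bar>a + c - 1\<bar> \<le> \<bar>a + c\<bar> + \<bar>1\<bar>" by (rule abs_triangle_ineq4)
  also have "\<bar>a + c\<bar> \<le> \<bar>a\<bar> + \<bar>c\<bar>" by (rule abs_triangle_ineq)
  finally show ?thesis by simp
qed

lemma nd_le: "nd b x \<le> exp (\<bar>b\<bar> * \<bar>x\<bar>) * nd 0 x"
proof -
  have "exp (- (b^2) / 2) \<le> 1" by simp
  moreover have "exp (b*x) \<le> exp (\<bar>b\<bar> * \<bar>x\<bar>)" by (simp add: abs_mult[symmetric])
  ultimately have "exp (- (b^2) / 2) * exp (b*x) \<le> 1 * exp (\<bar>b\<bar> * \<bar>x\<bar>)"
    by (intro mult_mono) auto
  then show ?thesis unfolding nd_shift[of b x] using nd_pos[of 0 x]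
    by (intro mult_right_mono) auto
qed

lemma inv_cosh2_le1: "1 / cosh (y::real) ^ 2 \<le> 1"
  using cosh_ge1[of y] by (simp add: divide_le_eq one_le_power)

lemma DERIV_nd: "(nd b has_real_derivative (-(x-b) * nd b x)) (at x)"
proof -
  have "((\<lambda>x. exp (-((x-b)^2)/2)) has_real_derivative exp (-((x-b)^2)/2) * (-(x-b))) (at x)"
    by (rule derivative_eq_intros refl | simp)+
  from DERIV_cdivide[OF this, of "sqrt (2*pi)"] show ?thesis
    unfolding nd_def[abs_def] by (simp add: algebra_simps)
qed

lemma isCont_nd[continuous_intros]: "isCont (nd b) x"
  unfolding nd_def[abs_def] by (auto intro!: continuous_intros)

lemma isCont_nd'[continuous_intros]: "isCont f x \<Longrightarrow> isCont (\<lambda>x. nd b (f x)) x"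
  unfolding nd_def by (auto intro!: continuous_intros)


lemma DERIV_nd_chain[derivative_intros]:
  "(f has_real_derivative f') (at x within s) \<Longrightarrow>
   ((\<lambda>x. nd b (f x)) has_real_derivative (-(f x - b) * nd b (f x)) * f') (at x within s)"
  by (rule DERIV_chain2[OF DERIV_nd])

definition Q :: "real \<Rightarrow> real \<Rightarrow> real \<Rightarrow> real" where
  "Q m b x = nd b x * (x^2 + b*x - 1) / cosh (m*x)^2"
definition g1' :: "real \<Rightarrow> real \<Rightarrow> real \<Rightarrow> real" where
  "g1' m b x = (1/cosh(m*x)^2 - 2*m*x* sinh(m*x)/cosh(m*x)^3 - (x-b)*x/cosh(m*x)^2) * nd b x"
definition A :: "real \<Rightarrow> real \<Rightarrow> real" where
  "A t x = (x^2-1)*cosh(t*x) + t*x* sinh(t*x)"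
definition R :: "real \<Rightarrow> real \<Rightarrow> real \<Rightarrow> real" where
  "R m t x = nd 0 x * A t x / cosh(m*x)^2"

lemma deriv_g1: "((\<lambda>x. x / cosh(m*x)^2 * nd b x) has_real_derivative g1' m b x) (at x)"
  unfolding g1'_def
  apply (rule derivative_eq_intros refl | simp)+
  apply (simp add: field_simps power2_eq_square power3_eq_cube)
  apply algebra
  done

lemma L3: "nd b x * G_integrand m x = -(m/2) * g1' m b x + (m/2) * Q m b x"
  unfolding G_integrand_eq g1'_def Q_def tanh_def
  by (simp add: field_simps power2_eq_square power3_eq_cube)


lemma poly_le: "\<bar>x^2 + b*x - 1\<bar> \<le> (5 + \<bar>b\<bar>) * exp \<bar>x::real\<bar>"
proof -
  have e1: "1 \<le> exp \<bar>x\<bar>" by simp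
  have "\<bar>x^2 + b*x - 1\<bar> \<le> \<bar>x^2\<bar> + \<bar>b*x\<bar> + 1" by (rule tri3)
  also have "\<bar>b*x\<bar> = \<bar>b\<bar>*\<bar>x\<bar>" by (rule abs_mult)
  also have "\<bar>x^2\<bar> = x^2" by simp
  also have "\<bar>b\<bar>*\<bar>x\<bar> \<le> \<bar>b\<bar> * exp \<bar>x\<bar>" by (rule mult_left_mono[OF x1_le abs_ge_zero])
  hence "x^2 + \<bar>b\<bar>*\<bar>x\<bar> + 1 \<le> 4 * exp \<bar>x\<bar> + \<bar>b\<bar> * exp \<bar>x\<bar> + exp \<bar>x\<bar>"
    using x2_le[of x] e1 by linarith
  finally show ?thesis by (simp add: algebra_simps)
qed

lemma isCont_Q[continuous_intros]: "isCont (Q m b) x"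
  unfolding Q_def by (auto intro!: continuous_intros)

lemma int_Q: "integrable lborel (Q m b)"
proof (rule int_bound[where C="5 + \<bar>b\<bar>" and K="\<bar>b\<bar> + 1"])
  fix x :: real
  have "\<bar>Q m b x\<bar> = nd b x * \<bar>x^2 + b*x - 1\<bar> * (1 / cosh (m*x)^2)"
    using nd_pos[of b x] by (simp add: Q_def abs_mult)
  also have "\<dots> \<le> nd b x * \<bar>x^2 + b*x - 1\<bar>"
    using nd_pos[of b x] inv_cosh2_le1[of "m*x"] mult_left_mono[of "1 / cosh (m*x)^2" 1 "nd b x * \<bar>x^2 + b*x - 1\<bar>"] by auto
  also have "\<dots> \<le> (exp (\<bar>b\<bar> * \<bar>x\<bar>) * nd 0 x) * ((5 + \<bar>b\<bar>) * exp \<bar>x\<bar>)"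
    by (rule mult_mono[OF nd_le poly_le]) (auto simp: nd_pos less_imp_le)
  also have "\<dots> = (5 + \<bar>b\<bar>) * exp ((\<bar>b\<bar> + 1) * \<bar>x\<bar>) * nd 0 x"
    by (simp add: algebra_simps flip: exp_add)
  finally show "\<bar>Q m b x\<bar> \<le> (5 + \<bar>b\<bar>) * exp ((\<bar>b\<bar> + 1) * \<bar>x\<bar>) * nd 0 x" .
qed (auto intro!: continuous_intros)

lemma G_integrand_fun: "G_integrand m = (\<lambda>x. m * (m * x * tanh (m * x) + x^2 - 1) / cosh (m * x) ^ 2)"
  by (rule ext) (rule G_integrand_eq)

lemma isCont_NG[continuous_intros]: "isCont (\<lambda>x. nd b x * G_integrand m x) x"
  unfolding G_integrand_eq tanh_def by (auto intro!: continuous_intros)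

lemma int_NG: "integrable lborel (\<lambda>x. nd b x * G_integrand m x)"
proof (rule int_bound[where C="\<bar>m\<bar> * (\<bar>m\<bar> + 5)" and K="\<bar>b\<bar> + 1"])
  fix x :: real
  have t: "\<bar>tanh (m*x)\<bar> \<le> 1" using tanh_real_bounds[of "m*x"] by auto
  have e1: "1 \<le> exp \<bar>x\<bar>" by simp
  have "\<bar>m * x * tanh (m * x)\<bar> = \<bar>m\<bar> * \<bar>x\<bar> * \<bar>tanh (m * x)\<bar>" by (simp add: abs_mult)
  also have "\<dots> \<le> \<bar>m\<bar> * \<bar>x\<bar> * 1" using t by (intro mult_left_mono) auto
  finally have tt: "\<bar>m * x * tanh (m * x)\<bar> \<le> \<bar>m\<bar> * \<bar>x\<bar> * 1" .
  have "\<bar>m * x * tanh (m * x) + x^2 - 1\<bar> \<le> \<bar>m * x * tanh (m * x)\<bar> + \<bar>x^2\<bar> + 1"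
    by (rule tri3)
  also have "\<bar>x^2\<bar> = x^2" by simp
  also have "\<bar>m\<bar>*\<bar>x\<bar> \<le> \<bar>m\<bar> * exp \<bar>x\<bar>" by (rule mult_left_mono[OF x1_le abs_ge_zero])
  hence "\<bar>m * x * tanh (m * x)\<bar> + x^2 + 1 \<le> \<bar>m\<bar> * exp \<bar>x\<bar> + 4 * exp \<bar>x\<bar> + exp \<bar>x\<bar>"
    using x2_le[of x] e1 tt by linarith
  finally have p: "\<bar>m * x * tanh (m * x) + x^2 - 1\<bar> \<le> (\<bar>m\<bar> + 5) * exp \<bar>x\<bar>" by (simp add: algebra_simps)
  have "\<bar>nd b x * G_integrand m x\<bar> = nd b x * (\<bar>m\<bar> * \<bar>m * x * tanh (m * x) + x^2 - 1\<bar>) * (1 / cosh (m*x)^2)"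
    using nd_pos[of b x] by (simp add: G_integrand_eq abs_mult)
  also have "\<dots> \<le> nd b x * (\<bar>m\<bar> * \<bar>m * x * tanh (m * x) + x^2 - 1\<bar>)"
    using nd_pos[of b x] inv_cosh2_le1[of "m*x"] mult_left_mono[of "1 / cosh (m*x)^2" 1 "nd b x * (\<bar>m\<bar> * \<bar>m * x * tanh (m * x) + x^2 - 1\<bar>)"] by auto
  also have "\<dots> \<le> (exp (\<bar>b\<bar> * \<bar>x\<bar>) * nd 0 x) * (\<bar>m\<bar> * ((\<bar>m\<bar> + 5) * exp \<bar>x\<bar>))"
    by (rule mult_mono[OF nd_le mult_left_mono[OF p abs_ge_zero]]) (auto simp: nd_pos less_imp_le)
  also have "\<dots> = \<bar>m\<bar> * (\<bar>m\<bar> + 5) * exp ((\<bar>b\<bar> + 1) * \<bar>x\<bar>) * nd 0 x"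
  proof -
    have e: "exp ((\<bar>b\<bar> + 1) * \<bar>x\<bar>) = exp (\<bar>b\<bar> * \<bar>x\<bar>) * exp \<bar>x\<bar>" by (simp add: distrib_right exp_add)
    show ?thesis by (simp only: e) (simp only: mult_ac)
  qed
  finally show "\<bar>nd b x * G_integrand m x\<bar> \<le> \<bar>m\<bar> * (\<bar>m\<bar> + 5) * exp ((\<bar>b\<bar> + 1) * \<bar>x\<bar>) * nd 0 x" .
qed (auto intro!: continuous_intros)


lemma g1'_eq: "m \<noteq> 0 \<Longrightarrow> g1' m b x = Q m b x - (2/m) * (nd b x * G_integrand m x)"
  using L3[of b x m] by (simp add: field_simps)

lemma int_g1': "m \<noteq> 0 \<Longrightarrow> integrable lborel (g1' m b)"
proof -
  assume "m \<noteq> 0"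
  have "integrable lborel (\<lambda>x. Q m b x - (2/m) * (nd b x * G_integrand m x))"
    by (intro Bochner_Integration.integrable_diff integrable_mult_right int_Q int_NG)
  moreover have "g1' m b = (\<lambda>x. Q m b x - (2/m) * (nd b x * G_integrand m x))"
    by (intro ext g1'_eq[OF \<open>m \<noteq> 0\<close>])
  ultimately show ?thesis by simp
qed

lemma lim_absexp: "((\<lambda>x::real. \<bar>x\<bar> * exp (-\<bar>x\<bar>)) \<longlongrightarrow> 0) at_top"
proof -
  have "((\<lambda>x::real. x^1 / exp x) \<longlongrightarrow> 0) at_top" by (rule tendsto_power_div_exp_0)
  moreover have "eventually (\<lambda>x::real. x^1 / exp x = \<bar>x\<bar> * exp (-\<bar>x\<bar>)) at_top"
    using eventually_ge_at_top[of "0::real"] by eventually_elim (simp add: exp_minus field_simps)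
  ultimately show ?thesis by (rule Lim_transform_eventually)
qed

lemma lim_absexp': "((\<lambda>x::real. \<bar>x\<bar> * exp (-\<bar>x\<bar>)) \<longlongrightarrow> 0) at_bot"
  unfolding filterlim_at_bot_mirror using lim_absexp by simp

lemma nd_exp_bound: "\<bar>x * nd b x\<bar> \<le> exp (\<bar>b\<bar> + 1/2) * (\<bar>x\<bar> * exp (-\<bar>x\<bar>))"
proof -
  have "(\<bar>x\<bar> - \<bar>b\<bar>)^2 \<le> (x-b)^2"
    by (metis abs_abs abs_le_square_iff abs_triangle_ineq3)
  moreover have "\<bar>x\<bar> - \<bar>b\<bar> - 1/2 \<le> (\<bar>x\<bar> - \<bar>b\<bar>)^2/2"
    using zero_le_power2[of "\<bar>x\<bar> - \<bar>b\<bar> - 1"] by (simp add: power2_eq_square algebra_simps)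
  ultimately have "-((x-b)^2)/2 \<le> (\<bar>b\<bar> + 1/2) + -\<bar>x\<bar>" by linarith
  hence E: "exp (-((x-b)^2)/2) \<le> exp (\<bar>b\<bar> + 1/2) * exp (-\<bar>x\<bar>)" by (simp flip: exp_add)
  have "nd b x = exp (-((x-b)^2)/2) / sqrt (2*pi)" by (simp add: nd_def)
  also have "\<dots> \<le> exp (-((x-b)^2)/2) / 1"
    using pi_gt3 by (intro divide_left_mono) auto
  also have "\<dots> \<le> exp (\<bar>b\<bar> + 1/2) * exp (-\<bar>x\<bar>)" using E by simp
  finally have "nd b x \<le> exp (\<bar>b\<bar> + 1/2) * exp (-\<bar>x\<bar>)" .
  then have "\<bar>x\<bar> * nd b x \<le> \<bar>x\<bar> * (exp (\<bar>b\<bar> + 1/2) * exp (-\<bar>x\<bar>))"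
    by (rule mult_left_mono) simp
  then show ?thesis using nd_pos[of b x] by (simp add: abs_mult mult_ac)
qed

lemma lim_xnd: "((\<lambda>x. x * nd b x) \<longlongrightarrow> 0) at_top" "((\<lambda>x. x * nd b x) \<longlongrightarrow> 0) at_bot"
  using lim_absexp lim_absexp'
  by (auto intro!: Lim_null_comparison[where g="\<lambda>x. exp (\<bar>b\<bar> + 1/2) * (\<bar>x\<bar> * exp (-\<bar>x\<bar>))"]
      tendsto_mult_right_zero simp: nd_exp_bound)

lemma lim_cmp:
  fixes f :: "real \<Rightarrow> real"
  assumes "\<And>x. \<bar>f x\<bar> \<le> \<bar>x * nd b x\<bar>"
  shows "(f \<longlongrightarrow> 0) at_top" "(f \<longlongrightarrow> 0) at_bot"
  using assms lim_xnd[of b]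
  by (auto intro!: Lim_null_comparison[where g="\<lambda>x. \<bar>x * nd b x\<bar>"] tendsto_rabs_zero)

lemma int_g1'_zero: "m \<noteq> 0 \<Longrightarrow> integral\<^sup>L lborel (g1' m b) = 0"
proof (rule FTC_R[OF deriv_g1])
  show "isCont (g1' m b) x" for x unfolding g1'_def by (intro continuous_intros) simp_all
  assume "m \<noteq> 0" then show "integrable lborel (g1' m b)" by (rule int_g1')
  have b: "\<bar>x / cosh(m*x)^2 * nd b x\<bar> \<le> \<bar>x * nd b x\<bar>" for x
  proof -
    have c: "1 \<le> cosh (m*x)^2" using cosh_ge1[of "m*x"] by (simp add: one_le_power)
    have "\<bar>x / cosh(m*x)^2 * nd b x\<bar> = \<bar>x * nd b x\<bar> / cosh (m*x)^2"
      by (simp add: abs_mult abs_divide)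
    also have "\<dots> \<le> \<bar>x * nd b x\<bar> / 1"
      by (rule divide_left_mono[OF c]) auto
    finally show ?thesis by simp
  qed
  show "((\<lambda>x. x / cosh(m*x)^2 * nd b x) \<longlongrightarrow> 0) at_top"
    by (rule lim_cmp(1)[OF b])
  show "((\<lambda>x. x / cosh(m*x)^2 * nd b x) \<longlongrightarrow> 0) at_bot"
    by (rule lim_cmp(2)[OF b])
qed

lemma G_eq_Q: "m \<noteq> 0 \<Longrightarrow> G m b = m/2 * integral\<^sup>L lborel (Q m b)"
proof -
  assume m: "m \<noteq> 0"
  have "G m b = integral\<^sup>L lborel (\<lambda>x. nd b x * G_integrand m x)"
    unfolding G_def normal_nd
    by (subst integral_density) (auto intro!: borel_measurable_continuous_onI continuous_at_imp_continuous_on continuous_intros simp: G_integrand_fun tanh_def nd_pos less_imp_le)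
  also have "\<dots> = integral\<^sup>L lborel (\<lambda>x. -(m/2) * g1' m b x + (m/2) * Q m b x)"
    by (simp add: L3)
  also have "\<dots> = -(m/2) * integral\<^sup>L lborel (g1' m b) + (m/2) * integral\<^sup>L lborel (Q m b)"
    using int_g1'[OF m] int_Q by simp
  finally show ?thesis using int_g1'_zero[OF m] by simp
qed




lemma sym_alg: "(C::real) \<noteq> 0 \<Longrightarrow> (e0*E*N*(x^2+b*x-1)/C + e0*E'*N*(x^2+b*(-x)-1)/C)/2
   = e0*(N*((x^2-1)*((E+E')/2) + b*x*((E-E')/2))/C)"
  by (simp add: field_simps)

lemma Q_sym: "(Q m b x + Q m b (-x))/2 = exp (-(b^2)/2) * R m b x"
proof -
  have c: "cosh (b*x) = (exp (b*x) + exp (-(b*x)))/2" "sinh (b*x) = (exp (b*x) - exp (-(b*x)))/2"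
    by (simp_all add: cosh_def sinh_def)
  have n0: "nd 0 (-x) = nd 0 x" by (simp add: nd_def)
  have q1: "Q m b x = exp (-(b^2)/2) * exp (b*x) * nd 0 x * (x^2+b*x-1) / cosh (m*x)^2"
    unfolding Q_def nd_shift[of b x] by simp
  have q2: "Q m b (-x) = exp (-(b^2)/2) * exp (-(b*x)) * nd 0 x * (x^2+b*(-x)-1) / cosh (m*x)^2"
    unfolding Q_def nd_shift[of b "-x"] n0 by simp
  have r: "R m b x = nd 0 x * ((x^2-1)*((exp (b*x) + exp (-(b*x)))/2) + b*x*((exp (b*x) - exp (-(b*x)))/2)) / cosh (m*x)^2"
    unfolding R_def A_def c by simp
  show ?thesis unfolding q1 q2 r by (rule sym_alg) simp
qed

lemma int_Qneg: "integrable lborel (\<lambda>x. Q m b (-x))"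
  using lborel_integrable_real_affine[OF int_Q[of m b], of "-1" 0] by simp

lemma R_alt: "R m b x = exp ((b^2)/2) * ((Q m b x + Q m b (-x))/2)"
  unfolding Q_sym by (simp add: mult.assoc[symmetric] flip: exp_add)

lemma int_R: "integrable lborel (R m b)"
proof -
  have "integrable lborel (\<lambda>x. exp ((b^2)/2) * ((Q m b x + Q m b (-x))/2))"
    by (intro integrable_mult_right integrable_divide Bochner_Integration.integrable_add int_Q int_Qneg)
  moreover have "R m b = (\<lambda>x. exp ((b^2)/2) * ((Q m b x + Q m b (-x))/2))"
    by (intro ext R_alt)
  ultimately show ?thesis by simp
qed

lemma int_Q_R: "integral\<^sup>L lborel (Q m b) = exp (-(b^2)/2) * integral\<^sup>L lborel (R m b)"
proof -
  have s: "integral\<^sup>L lborel (Q m b) = integral\<^sup>L lborel (\<lambda>x. Q m b (-x))"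
    using lborel_integral_real_affine[of "-1" "Q m b" 0] by simp
  have "integral\<^sup>L lborel (Q m b) = integral\<^sup>L lborel (\<lambda>x. (Q m b x + Q m b (-x))/2)"
    using s int_Q[of m b] int_Qneg[of m b] by simp
  also have "\<dots> = integral\<^sup>L lborel (\<lambda>x. exp (-(b^2)/2) * R m b x)"
    by (simp only: Q_sym)
  also have "\<dots> = exp (-(b^2)/2) * integral\<^sup>L lborel (R m b)" by simp
  finally show ?thesis .
qed

lemma deriv_F2: "((\<lambda>x. x * nd 0 x / cosh (m*x)) has_real_derivative (- R m m x)) (at x)"
  unfolding R_def A_def
  apply (rule derivative_eq_intros refl | simp)+
  apply (simp add: field_simps power2_eq_square power3_eq_cube)
  apply algebra?
  done

lemma R_zero: "integral\<^sup>L lborel (R m m) = 0"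
proof -
  have "integral\<^sup>L lborel (\<lambda>x. - R m m x) = 0"
  proof (rule FTC_R[OF deriv_F2])
    show "isCont (\<lambda>x. - R m m x) x" for x unfolding R_def A_def by (auto intro!: continuous_intros)
    show "integrable lborel (\<lambda>x. - R m m x)" using int_R by simp
    have b: "\<bar>x * nd 0 x / cosh (m*x)\<bar> \<le> \<bar>x * nd 0 x\<bar>" for x
    proof -
      have "\<bar>x * nd 0 x / cosh (m*x)\<bar> = \<bar>x * nd 0 x\<bar> / cosh (m*x)"
        using cosh_real_pos[of "m*x"] by (simp add: abs_divide)
      also have "\<dots> \<le> \<bar>x * nd 0 x\<bar> / 1"
        by (rule divide_left_mono[OF cosh_ge1]) auto
      finally show ?thesis by simp
    qed
    show "((\<lambda>x. x * nd 0 x / cosh (m*x)) \<longlongrightarrow> 0) at_top" "((\<lambda>x. x * nd 0 x / cosh (m*x)) \<longlongrightarrow> 0) at_bot"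
      using lim_cmp[of "\<lambda>x. x * nd 0 x / cosh (m*x)", OF b] by auto
  qed
  then show ?thesis by simp
qed


definition D :: "real \<Rightarrow> real \<Rightarrow> real" where
  "D t x = x^3 * sinh (t*x) + t * x^2 * cosh (t*x)"

lemma DERIV_A: "((\<lambda>t. A t x) has_real_derivative D t x) (at t)"
  unfolding A_def D_def
  apply (rule derivative_eq_intros refl | simp)+
  apply (simp add: algebra_simps power2_eq_square power3_eq_cube)
  done

lemma xsinh_nonneg: "0 \<le> t \<Longrightarrow> 0 \<le> x * sinh (t*x::real)"
proof (cases "x \<ge> 0")
  case True
  assume "0 \<le> t" then have "0 \<le> t*x" using True by simp
  then show ?thesis using True by simp
next
  case False
  assume "0 \<le> t" then have "t*x \<le> 0" using False by (simp add: mult_nonneg_nonpos)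
  then have "sinh (t*x) \<le> 0" by simp
  then show ?thesis using False by (simp add: mult_nonpos_nonpos)
qed

lemma D_nonneg: "0 \<le> t \<Longrightarrow> 0 \<le> D t x"
proof -
  assume t: "0 \<le> t"
  have "D t x = x^2 * (x * sinh (t*x)) + t * x^2 * cosh (t*x)"
    by (simp add: D_def power2_eq_square power3_eq_cube)
  moreover have "0 \<le> x^2 * (x * sinh (t*x))" using xsinh_nonneg[OF t, of x] by simp
  moreover have "0 \<le> t * x^2 * cosh (t*x)" using t cosh_real_pos[of "t*x"] by simp
  ultimately show ?thesis by linarith
qed

lemma cosh_mono_abs: "\<bar>u\<bar> \<le> \<bar>v\<bar> \<Longrightarrow> cosh (u::real) \<le> cosh v"
  by (metis abs_ge_zero cosh_real_abs cosh_real_nonneg_le_iff)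

lemma D_le: "0 \<le> t \<Longrightarrow> t \<le> s \<Longrightarrow> D t x \<le> (\<bar>x\<bar>^3 + s * x^2) * cosh (s*x)"
proof -
  assume t: "0 \<le> t" and ts: "t \<le> s"
  have cc: "cosh (t*x) \<le> cosh (s*x)"
    using t ts by (intro cosh_mono_abs) (simp add: abs_mult mult_right_mono)
  have "x * sinh (t*x) \<le> \<bar>x\<bar> * \<bar>sinh (t*x)\<bar>" by (metis abs_ge_self abs_mult)
  also have "\<dots> \<le> \<bar>x\<bar> * cosh (s*x)"
    using abs_sinh_le[of "t*x"] cc by (intro mult_left_mono) auto
  finally have s1: "x * sinh (t*x) \<le> \<bar>x\<bar> * cosh (s*x)" .
  have "x^3 * sinh (t*x) = x^2 * (x * sinh (t*x))" by (simp add: power2_eq_square power3_eq_cube)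
  also have "\<dots> \<le> x^2 * (\<bar>x\<bar> * cosh (s*x))" by (rule mult_left_mono[OF s1]) simp
  also have "\<dots> = \<bar>x\<bar>^3 * cosh (s*x)"
    by (simp add: power2_eq_square power3_eq_cube abs_mult_self_eq)
  finally have p1: "x^3 * sinh (t*x) \<le> \<bar>x\<bar>^3 * cosh (s*x)" .
  have p2: "t * x^2 * cosh (t*x) \<le> s * x^2 * cosh (s*x)"
    using t ts cc cosh_real_pos[of "t*x"]
    by (intro mult_mono) auto
  show ?thesis unfolding D_def using p1 p2 by (simp add: algebra_simps)
qed

lemma A_MVT: "s < t \<Longrightarrow> \<exists>z. s < z \<and> z < t \<and> A t x - A s x = (t - s) * D z x"
  by (rule MVT2) (auto intro: DERIV_A)

lemma A_mono: "0 \<le> s \<Longrightarrow> s \<le> t \<Longrightarrow> A s x \<le> A t x"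
proof (cases "s = t")
  case False
  assume "0 \<le> s" "s \<le> t"
  with False have "s < t" by simp
  then obtain z where z: "s < z" "z < t" "A t x - A s x = (t - s) * D z x" using A_MVT by blast
  have "0 \<le> (t - s) * D z x" using z \<open>0 \<le> s\<close> \<open>s < t\<close> by (intro mult_nonneg_nonneg D_nonneg) auto
  with z show ?thesis by simp
qed simp

lemma A_lip: "0 \<le> s \<Longrightarrow> s \<le> t \<Longrightarrow> A t x - A s x \<le> (t - s) * ((\<bar>x\<bar>^3 + t * x^2) * cosh (t*x))"
proof (cases "s = t")
  case False
  assume "0 \<le> s" "s \<le> t"
  with False have "s < t" by simp
  then obtain z where z: "s < z" "z < t" "A t x - A s x = (t - s) * D z x" using A_MVT by blast
  have "(t - s) * D z x \<le> (t - s) * ((\<bar>x\<bar>^3 + t * x^2) * cosh (t*x))"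
    using z \<open>0 \<le> s\<close> \<open>s < t\<close> by (intro mult_left_mono D_le) auto
  with z show ?thesis by simp
qed simp

lemma fin:
  fixes \<mu> b :: real
  assumes mu: "10000000 \<le> \<mu>" and mb: "\<mu> \<le> b"
  shows "4 * \<mu> * (27 + 4*b) * exp (((b - 2*\<mu> + 1)^2 - b^2)/2) \<le> 1/100"
proof -
  define d where "d = b - \<mu>"
  have d0: "0 \<le> d" using mb by (simp add: d_def)
  have bd: "b = \<mu> + d" by (simp add: d_def)
  have eq: "((b - 2*\<mu> + 1)^2 - b^2)/2 = d + 1/2 - 2*(\<mu>*d) - \<mu>"
    unfolding bd by (simp add: power2_eq_square field_simps)
  have md: "d \<le> \<mu>*d" using mu d0 by (simp add: mult_right_mono[of 1 \<mu> d, simplified])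
  have E: "((b - 2*\<mu> + 1)^2 - b^2)/2 \<le> (-d) + (-(\<mu>-1))" unfolding eq using md mu by linarith
  have e1: "exp (((b - 2*\<mu> + 1)^2 - b^2)/2) \<le> exp (-d) * exp (-(\<mu>-1))"
    using E by (simp flip: exp_add)
  have dexp: "d * exp (-d) \<le> 1"
  proof -
    have "d \<le> exp d" using exp_ge_add_one_self[of d] by linarith
    then show ?thesis by (simp add: exp_minus field_simps)
  qed
  have ed: "exp (-d) \<le> 1" using d0 by simp
  have h3: "(27 + 4*b) * exp (-d) \<le> 31 + 4*\<mu>"
  proof -
    have "(27 + 4*b) * exp (-d) = (27 + 4*\<mu>) * exp (-d) + 4 * (d * exp (-d))"
      unfolding bd by (simp add: algebra_simps)
    also have "\<dots> \<le> (27 + 4*\<mu>) * 1 + 4 * 1"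
      using ed dexp mu by (intro add_mono mult_left_mono) auto
    finally show ?thesis by simp
  qed
  have m1: "\<mu>/2 \<le> \<mu> - 1" using mu by simp
  have "(\<mu>/2)^3 \<le> (\<mu>-1)^3" by (rule power_mono[OF m1]) (use mu in simp)
  also have "(\<mu>-1)^3 \<le> 27 * exp (\<mu> - 1)" using x3_le[of "\<mu>-1"] mu by simp
  finally have P: "\<mu>^3 \<le> 216 * exp (\<mu>-1)" by (simp add: power_divide)
  have Q1: "86400 * (31 + 4*\<mu>) \<le> \<mu> * \<mu>"
  proof -
    have "86400 * (31 + 4*\<mu>) \<le> 10000000 * \<mu>" using mu by simp
    also have "\<dots> \<le> \<mu> * \<mu>" using mu by (intro mult_right_mono) auto
    finally show ?thesis .
  qed
  have Q2: "400 * \<mu> * (31 + 4*\<mu>) * 216 \<le> \<mu>^3"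
  proof -
    have "400 * \<mu> * (31 + 4*\<mu>) * 216 = \<mu> * (86400 * (31 + 4*\<mu>))" by simp
    also have "\<dots> \<le> \<mu> * (\<mu> * \<mu>)" using Q1 mu by (intro mult_left_mono) auto
    finally show ?thesis by (simp add: power3_eq_cube)
  qed
  have Q3: "400 * \<mu> * (31 + 4*\<mu>) \<le> exp (\<mu>-1)" using P Q2 by simp
  have "4 * \<mu> * (27 + 4*b) * exp (((b - 2*\<mu> + 1)^2 - b^2)/2)
      \<le> 4 * \<mu> * (27 + 4*b) * (exp (-d) * exp (-(\<mu>-1)))"
    using e1 mu mb by (intro mult_left_mono) auto
  also have "\<dots> = 4 * \<mu> * ((27 + 4*b) * exp (-d)) * exp (-(\<mu>-1))" by (simp add: mult_ac)
  also have "\<dots> \<le> 4 * \<mu> * (31 + 4*\<mu>) * exp (-(\<mu>-1))"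
    using h3 mu by (intro mult_right_mono mult_left_mono) auto
  also have "\<dots> = (4 * \<mu> * (31 + 4*\<mu>)) / exp (\<mu>-1)" by (simp only: exp_minus divide_inverse)
  also have "\<dots> \<le> 1/100" using Q3 by (simp add: divide_le_eq)
  finally show ?thesis .
qed


lemma inv_cosh2_exp: "0 \<le> (m::real) \<Longrightarrow> 1 / cosh (m*(x::real))^2 \<le> 4 * exp (-2*m*\<bar>x\<bar>)"
proof -
  assume m: "0 \<le> m"
  have h: "exp (m*\<bar>x\<bar>)/2 \<le> cosh (m*x)" using cosh_ge_exp[of "m*x"] m by (simp add: abs_mult)
  have "(exp (m*\<bar>x\<bar>)/2)^2 \<le> cosh (m*x)^2" by (rule power_mono[OF h]) simp
  moreover have "(exp (m*\<bar>x\<bar>)/2)^2 = exp (2*m*\<bar>x\<bar>)/4"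
    by (simp add: power_divide power2_eq_square flip: exp_add)
  ultimately have c: "exp (2*m*\<bar>x\<bar>)/4 \<le> cosh (m*x)^2" by simp
  have "1 / cosh (m*x)^2 \<le> 1 / (exp (2*m*\<bar>x\<bar>)/4)"
    by (rule divide_left_mono[OF c]) auto
  also have "\<dots> = 4 * exp (-2*m*\<bar>x\<bar>)" by (simp add: exp_minus field_simps)
  finally show ?thesis .
qed

lemma P_bound: "0 \<le> (b::real) \<Longrightarrow> (\<bar>x::real\<bar>^3 + b * x^2) * cosh (b*x) \<le> (27 + 4*b) * exp ((b+1)*\<bar>x\<bar>)"
proof -
  assume b: "0 \<le> b"
  have "\<bar>x\<bar>^3 + b * x^2 \<le> 27 * exp \<bar>x\<bar> + b * (4 * exp \<bar>x\<bar>)"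
    using x3_le[of x] mult_left_mono[OF x2_le[of x] b] by linarith
  also have "\<dots> = (27 + 4*b) * exp \<bar>x\<bar>" by (simp add: algebra_simps)
  finally have p: "\<bar>x\<bar>^3 + b * x^2 \<le> (27 + 4*b) * exp \<bar>x\<bar>" .
  have c: "cosh (b*x) \<le> exp (b*\<bar>x\<bar>)" using cosh_le_exp[of "b*x"] b by (simp add: abs_mult)
  have "(\<bar>x\<bar>^3 + b * x^2) * cosh (b*x) \<le> ((27 + 4*b) * exp \<bar>x\<bar>) * exp (b*\<bar>x\<bar>)"
    by (rule mult_mono[OF p c]) (use b in auto)
  also have "\<dots> = (27 + 4*b) * exp ((b+1)*\<bar>x\<bar>)" by (simp add: algebra_simps exp_add)
  finally show ?thesis .
qed

lemma R_diff_bound: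
  assumes m: "0 < m" and mb: "m \<le> b"
  shows "R m b x - R m m x \<le> (b - m) * (4 * (27 + 4*b)) * (exp ((b - 2*m + 1)*\<bar>x\<bar>) * nd 0 x)"
proof -
  have b: "0 \<le> b" using m mb by simp
  have P0: "0 \<le> (\<bar>x\<bar>^3 + b * x^2) * cosh (b*x)"
    using b cosh_real_pos[of "b*x"] by simp
  have "R m b x - R m m x = nd 0 x * (A b x - A m x) * (1 / cosh (m*x)^2)"
    by (simp add: R_def algebra_simps diff_divide_distrib)
  also have "\<dots> \<le> nd 0 x * ((b - m) * ((\<bar>x\<bar>^3 + b * x^2) * cosh (b*x))) * (4 * exp (-2*m*\<bar>x\<bar>))"
    using A_lip[of m b x] inv_cosh2_exp[of m x] m mb nd_pos[of 0 x] P0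
    by (intro mult_mono mult_left_mono) auto
  also have "\<dots> \<le> nd 0 x * ((b - m) * ((27 + 4*b) * exp ((b+1)*\<bar>x\<bar>))) * (4 * exp (-2*m*\<bar>x\<bar>))"
    using P_bound[OF b, of x] m mb nd_pos[of 0 x]
    by (intro mult_right_mono mult_left_mono) auto
  also have "\<dots> = (b - m) * (4 * (27 + 4*b)) * ((exp ((b+1)*\<bar>x\<bar>) * exp (-2*m*\<bar>x\<bar>)) * nd 0 x)"
    by (simp add: mult_ac)
  also have "exp ((b+1)*\<bar>x\<bar>) * exp (-2*m*\<bar>x\<bar>) = exp ((b - 2*m + 1)*\<bar>x\<bar>)"
    by (simp add: algebra_simps flip: exp_add)
  finally show ?thesis .
qed

lemma int_expabs: "integrable lborel (\<lambda>x. exp (k*\<bar>x\<bar>) * nd 0 x)"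
  by (rule int_bound[where C=1 and K=k]) (auto intro!: continuous_intros simp: nd_pos less_imp_le)

lemma integral_expabs: "integral\<^sup>L lborel (\<lambda>x. exp (k*\<bar>x\<bar>) * nd 0 x) \<le> 2 * exp (k^2/2)"
proof -
  have "integral\<^sup>L lborel (\<lambda>x. exp (k*\<bar>x\<bar>) * nd 0 x) \<le> integral\<^sup>L lborel (\<lambda>x. exp (k^2/2) * (nd k x + nd (-k) x))"
  proof (rule Bochner_Integration.integral_mono)
    show "integrable lborel (\<lambda>x. exp (k*\<bar>x\<bar>) * nd 0 x)" by (rule int_expabs)
    show "integrable lborel (\<lambda>x. exp (k^2/2) * (nd k x + nd (-k) x))"
      by (intro integrable_mult_right Bochner_Integration.integrable_add integrable_nd)
    fix x :: real
    have "exp (k*\<bar>x\<bar>) \<le> exp (k*x) + exp (-k*x)"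
      by (cases "x \<ge> 0") auto
    hence "exp (k*\<bar>x\<bar>) * nd 0 x \<le> (exp (k*x) + exp (-k*x)) * nd 0 x"
      using nd_pos[of 0 x] by (intro mult_right_mono) auto
    also have "\<dots> = exp (k^2/2) * (nd k x + nd (-k) x)"
      using nd_exp[of x k] nd_exp[of x "-k"] by (simp add: algebra_simps)
    finally show "exp (k*\<bar>x\<bar>) * nd 0 x \<le> exp (k^2/2) * (nd k x + nd (-k) x)" .
  qed
  also have "\<dots> = 2 * exp (k^2/2)"
    using integrable_nd[of k] integrable_nd[of "-k"] by (simp add: integral_nd)
  finally show ?thesis .
qed

theorem lemmaC8:
  shows "\<exists>c::real > 0. \<forall>\<mu> \<mu>s :: real. \<mu> > 0 \<longrightarrow> \<mu>s > 0 \<longrightarrow> c \<le> \<mu> \<longrightarrow> \<mu> \<le> 4/3 * \<mu>s \<longrightarrow>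
            G \<mu> \<mu>s \<le> 0.01 * \<bar>\<mu> - \<mu>s\<bar>"
proof (intro exI[of _ "10000000"] conjI allI impI)
  fix m b :: real
  assume m0: "m > 0" and b0: "b > 0" and mc: "10000000 \<le> m" and "m \<le> 4/3 * b"
  have G1: "G m b = m/2 * exp (-(b^2)/2) * integral\<^sup>L lborel (\<lambda>x. R m b x - R m m x)"
    using G_eq_Q[of m b] m0 int_Q_R[of m b] int_R[of m b] int_R[of m m] R_zero[of m] by simp
  have pos: "0 \<le> m/2 * exp (-(b^2)/2)" using m0 by simp
  show "G m b \<le> 0.01 * \<bar>m - b\<bar>"
  proof (cases "b \<le> m")
    case True
    have le: "R m b x - R m m x \<le> 0" for x
    proof -
      have "A b x \<le> A m x" using A_mono[of b m x] b0 True by simp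
      then have "nd 0 x * A b x / cosh (m*x)^2 \<le> nd 0 x * A m x / cosh (m*x)^2"
        using nd_pos[of 0 x] by (intro divide_right_mono mult_left_mono) auto
      then show "R m b x - R m m x \<le> 0" by (simp add: R_def)
    qed
    have i: "integrable lborel (\<lambda>x. R m b x - R m m x)" using int_R[of m b] int_R[of m m] by simp
    have "integral\<^sup>L lborel (\<lambda>x. R m b x - R m m x) \<le> integral\<^sup>L lborel (\<lambda>x::real. 0::real)"
      by (rule Bochner_Integration.integral_mono[OF i Bochner_Integration.integrable_zero]) (rule le)
    then have "integral\<^sup>L lborel (\<lambda>x. R m b x - R m m x) \<le> 0" by simp
    then have "G m b \<le> 0" unfolding G1 using pos by (simp add: mult_nonneg_nonpos)
    then show ?thesis by simp
  next
    case False
    define k where "k = b - 2*m + 1"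
    have "integral\<^sup>L lborel (\<lambda>x. R m b x - R m m x)
        \<le> integral\<^sup>L lborel (\<lambda>x. (b - m) * (4 * (27 + 4*b)) * (exp (k*\<bar>x\<bar>) * nd 0 x))"
    proof (rule Bochner_Integration.integral_mono)
      show "integrable lborel (\<lambda>x. R m b x - R m m x)" using int_R[of m b] int_R[of m m] by simp
      show "integrable lborel (\<lambda>x. (b - m) * (4 * (27 + 4*b)) * (exp (k*\<bar>x\<bar>) * nd 0 x))"
        by (intro integrable_mult_right int_expabs)
      fix x show "R m b x - R m m x \<le> (b - m) * (4 * (27 + 4*b)) * (exp (k*\<bar>x\<bar>) * nd 0 x)"
        unfolding k_def using R_diff_bound[of m b x] m0 False by simp
    qed
    also have "\<dots> = (b - m) * (4 * (27 + 4*b)) * integral\<^sup>L lborel (\<lambda>x. exp (k*\<bar>x\<bar>) * nd 0 x)"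
      by simp
    also have "\<dots> \<le> (b - m) * (4 * (27 + 4*b)) * (2 * exp (k^2/2))"
      using False b0 integral_expabs[of k] by (intro mult_left_mono) auto
    finally have I: "integral\<^sup>L lborel (\<lambda>x. R m b x - R m m x) \<le> (b - m) * (4 * (27 + 4*b)) * (2 * exp (k^2/2))" .
    have "G m b \<le> m/2 * exp (-(b^2)/2) * ((b - m) * (4 * (27 + 4*b)) * (2 * exp (k^2/2)))"
      unfolding G1 using pos I by (rule mult_left_mono[rotated])
    also have "\<dots> = (b - m) * (4 * m * (27 + 4*b) * (exp (-(b^2)/2) * exp (k^2/2)))"
      by (simp add: algebra_simps)
    also have "exp (-(b^2)/2) * exp (k^2/2) = exp ((k^2 - b^2)/2)"
      by (simp add: diff_divide_distrib flip: exp_add)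
    also have "(b - m) * (4 * m * (27 + 4*b) * exp ((k^2 - b^2)/2)) \<le> (b - m) * (1/100)"
      using fin[of m b] mc False unfolding k_def by (intro mult_left_mono) auto
    also have "\<dots> = 0.01 * \<bar>m - b\<bar>" using False by simp
    finally show ?thesis .
  qed
qed simp

end
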